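(* Let $\alpha>0$ and let $(X_t;t\geq0)$ be an $\alpha$-IDT process which is stochastically continuous and has independent increments. Then $X$ is a time-changed Lévy process with the deterministic chronometer $h(t)=t^{\alpha}$, i.e. there is a Lévy process $(L_t;t\geq0)$ such that $(X_t;t\geq0)\stackrel{(law)}{=}(L_{t^\alpha};t\geq0)$ as processes.
   Context: For $\alpha>0$, a stochastic process $X=(X_t;t\geq0)$ (real or $\mathbb{R}^d$-valued) is called an $\alpha$-IDT process if for every integer $n\geq1$, $(X_{n^{1/\alpha}t};t\geq0)\stackrel{(law)}{=}(X^{(1)}_t+\cdots+X^{(n)}_t;t\geq0)$, where $X^{(1)},\dots,X^{(n)}$ are independent copies of $X$; equality in law means equality of all finite-dimensional distributions. *)

theory Defs
  imports "HOL-Probability.Probability"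
begin

definition is_process :: "'w measure \<Rightarrow> (real \<Rightarrow> 'w \<Rightarrow> 'a::euclidean_space) \<Rightarrow> bool" where
  "is_process M X \<longleftrightarrow> prob_space M \<and> (\<forall>t\<ge>0. X t \<in> borel_measurable M)"

definition fdd :: "'w measure \<Rightarrow> (real \<Rightarrow> 'w \<Rightarrow> 'a::euclidean_space) \<Rightarrow> real list \<Rightarrow> (nat \<Rightarrow> 'a) measure" where
  "fdd M X ts = distr M (PiM {..<length ts} (\<lambda>_. borel)) (\<lambda>\<omega>. \<lambda>i\<in>{..<length ts}. X (ts ! i) \<omega>)"

definition eq_law :: "'w measure \<Rightarrow> (real \<Rightarrow> 'w \<Rightarrow> 'a::euclidean_space) \<Rightarrow>
    'v measure \<Rightarrow> (real \<Rightarrow> 'v \<Rightarrow> 'a) \<Rightarrow> bool" where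
  "eq_law M X N Y \<longleftrightarrow> (\<forall>ts. (\<forall>t\<in>set ts. 0 \<le> t) \<longrightarrow> fdd M X ts = fdd N Y ts)"

text \<open>The independent copies are realised canonically on the
  product space PiM {..<n} (\<lambda>_. M): the i-th copy is X t (\<omega> i).\<close>
definition alpha_IDT :: "real \<Rightarrow> 'w measure \<Rightarrow> (real \<Rightarrow> 'w \<Rightarrow> 'a::euclidean_space) \<Rightarrow> bool" where
  "alpha_IDT \<alpha> M X \<longleftrightarrow> is_process M X \<and>
     (\<forall>n::nat. n \<ge> 1 \<longrightarrow>
        eq_law M (\<lambda>t \<omega>. X (real n powr (1 / \<alpha>) * t) \<omega>)
               (PiM {..<n} (\<lambda>_. M)) (\<lambda>t \<omega>. \<Sum>i<n. X t (\<omega> i)))"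

definition stoch_continuous :: "'w measure \<Rightarrow> (real \<Rightarrow> 'w \<Rightarrow> 'a::euclidean_space) \<Rightarrow> bool" where
  "stoch_continuous M X \<longleftrightarrow>
     (\<forall>t\<ge>0. \<forall>\<epsilon>>0.
        ((\<lambda>s. measure M {\<omega>\<in>space M. dist (X s \<omega>) (X t \<omega>) > \<epsilon>}) \<longlongrightarrow> 0) (at t within {0..}))"

definition indep_increments :: "'w measure \<Rightarrow> (real \<Rightarrow> 'w \<Rightarrow> 'a::euclidean_space) \<Rightarrow> bool" where
  "indep_increments M X \<longleftrightarrow>
     (\<forall>ts. sorted_wrt (<) ts \<longrightarrow> (\<forall>t\<in>set ts. 0 \<le> t) \<longrightarrow>
        prob_space.indep_vars M (\<lambda>_. borel)
          (\<lambda>i \<omega>. X (ts ! Suc i) \<omega> - X (ts ! i) \<omega>) {..<length ts - 1})"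

definition stationary_increments :: "'w measure \<Rightarrow> (real \<Rightarrow> 'w \<Rightarrow> 'a::euclidean_space) \<Rightarrow> bool" where
  "stationary_increments M X \<longleftrightarrow>
     (\<forall>s\<ge>0. \<forall>t\<ge>0. distr M borel (\<lambda>\<omega>. X (t + s) \<omega> - X s \<omega>) = distr M borel (X t))"

definition levy_process :: "'w measure \<Rightarrow> (real \<Rightarrow> 'w \<Rightarrow> 'a::euclidean_space) \<Rightarrow> bool" where
  "levy_process M L \<longleftrightarrow> is_process M L \<and> (AE \<omega> in M. L 0 \<omega> = 0) \<and>
     indep_increments M L \<and> stationary_increments M L \<and> stoch_continuous M L"

end

theory Submission
  imports Defs
begin

inductive_set trig :: "('a::euclidean_space \<Rightarrow> real) set" where
  base: "(\<lambda>x. a * cos (u \<bullet> x + c)) \<in> trig"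
| add: "f \<in> trig \<Longrightarrow> g \<in> trig \<Longrightarrow> (\<lambda>x. f x + g x) \<in> trig"

lemma trig_const: "(\<lambda>x. c) \<in> trig"
  using trig.base[of c 0 0] by simp

lemma trig_cmult: "f \<in> trig \<Longrightarrow> (\<lambda>x. k * f x) \<in> trig"
proof (induction rule: trig.induct)
  case (base a u c) then show ?case using trig.base[of "k*a" u c] by (simp add: mult.assoc)
next
  case (add f g) then show ?case using trig.add[of "\<lambda>x. k * f x" "\<lambda>x. k * g x"] by (simp add: distrib_left)
qed

lemma trig_base_mult: "g \<in> trig \<Longrightarrow> (\<lambda>x. a * cos (u \<bullet> x + c) * g x) \<in> trig"
proof (induction rule: trig.induct)
  case (base b v d)
  have "(\<lambda>x. a * cos (u \<bullet> x + c) * (b * cos (v \<bullet> x + d))) =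
        (\<lambda>x. (a*b/2) * cos ((u+v) \<bullet> x + (c+d)) + (a*b/2) * cos ((u-v) \<bullet> x + (c-d)))"
  proof
    fix x
    have "cos (u \<bullet> x + c) * cos (v \<bullet> x + d) = (cos ((u \<bullet> x + c) + (v \<bullet> x + d)) + cos ((u \<bullet> x + c) - (v \<bullet> x + d)))/2"
      by (simp add: cos_add cos_diff)
    moreover have "(u \<bullet> x + c) + (v \<bullet> x + d) = (u+v) \<bullet> x + (c+d)" by (simp add: inner_add_left)
    moreover have "(u \<bullet> x + c) - (v \<bullet> x + d) = (u-v) \<bullet> x + (c-d)" by (simp add: inner_diff_left)
    ultimately show "a * cos (u \<bullet> x + c) * (b * cos (v \<bullet> x + d)) =
        (a*b/2) * cos ((u+v) \<bullet> x + (c+d)) + (a*b/2) * cos ((u-v) \<bullet> x + (c-d))"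
      by (simp add: field_simps)
  qed
  then show ?case using trig.add[OF trig.base trig.base, of "a*b/2" "u+v" "c+d" "a*b/2" "u-v" "c-d"] by simp
next
  case (add f g) then show ?case using trig.add[of "\<lambda>x. a * cos (u \<bullet> x + c) * f x" "\<lambda>x. a * cos (u \<bullet> x + c) * g x"]
    by (simp add: distrib_left)
qed

lemma trig_mult: "f \<in> trig \<Longrightarrow> g \<in> trig \<Longrightarrow> (\<lambda>x. f x * g x) \<in> trig"
proof (induction rule: trig.induct)
  case (base a u c) then show ?case by (rule trig_base_mult)
next
  case (add f1 f2) then show ?case using trig.add[of "\<lambda>x. f1 x * g x" "\<lambda>x. f2 x * g x"]
    by (simp add: distrib_right)
qed

lemma trig_cont: "f \<in> trig \<Longrightarrow> continuous_on S f"
  by (induction rule: trig.induct) (auto intro!: continuous_intros)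

lemma trig_meas: "f \<in> trig \<Longrightarrow> f \<in> borel_measurable borel"
  by (induction rule: trig.induct) auto

lemma trig_bounded: "f \<in> trig \<Longrightarrow> \<exists>C. \<forall>x. \<bar>f x\<bar> \<le> C"
proof (induction rule: trig.induct)
  case (base a u c)
  have "\<bar>a * cos (u \<bullet> x + c)\<bar> \<le> \<bar>a\<bar>" for x
    by (simp add: abs_mult mult_left_le)
  then show ?case by blast
next
  case (add f g)
  then obtain C D where "\<forall>x. \<bar>f x\<bar> \<le> C" "\<forall>x. \<bar>g x\<bar> \<le> D" by blast
  then have "\<forall>x. \<bar>f x + g x\<bar> \<le> C + D" by (metis abs_triangle_ineq add_mono order_trans)
  then show ?case by blast
qed

lemma trig_poly: "real_polynomial_function p \<Longrightarrow> g \<in> trig \<Longrightarrow> (\<lambda>x. p (g x)) \<in> trig"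
proof (induction p rule: real_polynomial_function.induct)
  case (linear f)
  then obtain k where "f = (\<lambda>y. k * y)"
    by (metis bounded_linear.linear real_linearD mult.commute)
  then show ?case using trig_cmult[OF linear(2)] by simp
next
  case (const c) then show ?case by (simp add: trig_const)
next
  case (add f g) then show ?case by (auto intro: trig.add)
next
  case (mult f g) then show ?case by (auto intro: trig_mult)
qed

lemma trig_separable:
  fixes x y :: "'a::euclidean_space"
  assumes "x \<noteq> y" shows "\<exists>f\<in>trig. f x \<noteq> f y"
proof -
  define u where "u = (x - y) /\<^sub>R (norm (x - y))^2"
  have "(x - y) \<bullet> (x - y) \<noteq> 0" using assms by simp
  then have "u \<bullet> x - u \<bullet> y = 1"
    unfolding u_def by (simp add: power2_norm_eq_inner right_diff_distrib[symmetric] inner_diff_right[symmetric] del: inner_diff_right)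
  then have "u \<bullet> x - u \<bullet> y = 1" .
  let ?f = "\<lambda>z. 1 * cos (u \<bullet> z + (- (u \<bullet> y)))"
  have "?f y = 1" by simp
  moreover have "?f x = cos 1" using \<open>u \<bullet> x - u \<bullet> y = 1\<close> by simp
  moreover have "cos (1::real) \<noteq> 1"
  proof
    assume "cos (1::real) = 1"
    then obtain k::int where "1 = 2 * pi * k" using cos_one_2pi_int[of 1] by (auto simp: mult.commute mult.left_commute)
    show False
    proof (cases "k \<ge> 1")
      case True
      then have "2 * pi * 1 \<le> 2 * pi * k" using pi_gt_zero by (intro mult_left_mono) auto
      with \<open>1 = 2 * pi * k\<close> pi_gt3 show False by linarith
    next
      case False
      then have "k \<le> 0" by linarith
      then have "2 * pi * k \<le> 0" using pi_gt_zero by (simp add: mult_nonneg_nonpos)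
      with \<open>1 = 2 * pi * k\<close> show False by linarith
    qed
  qed
  ultimately show ?thesis using trig.base[of 1 u "- (u \<bullet> y)"] by metis
qed

lemma trig_integral_eq:
  fixes \<mu> \<nu> :: "'a::euclidean_space measure"
  assumes P: "prob_space \<mu>" "prob_space \<nu>" and S: "sets \<mu> = sets borel" "sets \<nu> = sets borel"
    and H: "\<And>u c. (\<integral>x. cos (u \<bullet> x + c) \<partial>\<mu>) = (\<integral>x. cos (u \<bullet> x + c) \<partial>\<nu>)"
    and g: "g \<in> trig"
  shows "integrable \<mu> g" "integrable \<nu> g" "(\<integral>x. g x \<partial>\<mu>) = (\<integral>x. g x \<partial>\<nu>)"
proof -
  interpret m: prob_space \<mu> by fact
  interpret n: prob_space \<nu> by fact
  have mg: "g \<in> borel_measurable \<mu>" "g \<in> borel_measurable \<nu>"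
    using trig_meas[OF g] measurable_cong_sets[OF S(1) refl] measurable_cong_sets[OF S(2) refl] by auto
  obtain C where C: "\<And>x. \<bar>g x\<bar> \<le> C" using trig_bounded[OF g] by blast
  show "integrable \<mu> g" by (rule m.integrable_const_bound[of _ C]) (use C mg in auto)
  show "integrable \<nu> g" by (rule n.integrable_const_bound[of _ C]) (use C mg in auto)
  show "(\<integral>x. g x \<partial>\<mu>) = (\<integral>x. g x \<partial>\<nu>)"
    using g
  proof (induction rule: trig.induct)
    case (base a u c) then show ?case using H[of u c] by simp
  next
    case (add f h)
    have i: "integrable \<mu> f" "integrable \<nu> f" "integrable \<mu> h" "integrable \<nu> h"
    proof -
      have mf: "f \<in> borel_measurable \<mu>" "f \<in> borel_measurable \<nu>"
               "h \<in> borel_measurable \<mu>" "h \<in> borel_measurable \<nu>"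
        using trig_meas[OF add(1)] trig_meas[OF add(2)] measurable_cong_sets[OF S(1) refl] measurable_cong_sets[OF S(2) refl] by auto
      obtain C1 where C1: "\<And>x. \<bar>f x\<bar> \<le> C1" using trig_bounded[OF add(1)] by blast
      obtain C2 where C2: "\<And>x. \<bar>h x\<bar> \<le> C2" using trig_bounded[OF add(2)] by blast
      show "integrable \<mu> f" by (rule m.integrable_const_bound[of _ C1]) (use C1 mf in auto)
      show "integrable \<nu> f" by (rule n.integrable_const_bound[of _ C1]) (use C1 mf in auto)
      show "integrable \<mu> h" by (rule m.integrable_const_bound[of _ C2]) (use C2 mf in auto)
      show "integrable \<nu> h" by (rule n.integrable_const_bound[of _ C2]) (use C2 mf in auto)
    qed
    then show ?case using add by simp
  qed
qed

lemma clamp_lip: "\<bar>max (-B) (min B x) - max (-B) (min B y)\<bar> \<le> \<bar>x - y\<bar>" for B x y :: real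
  by (auto simp: max_def min_def abs_if)

lemma abs_aux: "a = b \<Longrightarrow> \<bar>x - a\<bar> \<le> T \<Longrightarrow> \<bar>y - b\<bar> \<le> T \<Longrightarrow> \<bar>x - y\<bar> \<le> 2*T" for a b x y T :: real
  unfolding abs_le_iff by linarith

lemma bcont_integral_eq:
  fixes \<mu> \<nu> :: "'a::euclidean_space measure" and f :: "'a \<Rightarrow> real"
  assumes P: "prob_space \<mu>" "prob_space \<nu>" and S: "sets \<mu> = sets borel" "sets \<nu> = sets borel"
    and H: "\<And>u c. (\<integral>x. cos (u \<bullet> x + c) \<partial>\<mu>) = (\<integral>x. cos (u \<bullet> x + c) \<partial>\<nu>)"
    and fc: "continuous_on UNIV f" and fB: "\<And>x. \<bar>f x\<bar> \<le> B"
  shows "(\<integral>x. f x \<partial>\<mu>) = (\<integral>x. f x \<partial>\<nu>)"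
proof -
  interpret m: prob_space \<mu> by fact
  interpret n: prob_space \<nu> by fact
  have sp: "space \<mu> = UNIV" "space \<nu> = UNIV"
    using sets_eq_imp_space_eq[OF S(1)] sets_eq_imp_space_eq[OF S(2)] by simp_all
  have mf: "f \<in> borel_measurable \<mu>" "f \<in> borel_measurable \<nu>"
    using borel_measurable_continuous_onI[OF fc] measurable_cong_sets[OF S(1) refl] measurable_cong_sets[OF S(2) refl] by auto
  have B0: "0 \<le> B" using fB[of 0] by linarith
  have key: "\<bar>(\<integral>x. f x \<partial>\<mu>) - (\<integral>x. f x \<partial>\<nu>)\<bar> \<le> 2 * (2*e + (2*B+e)*e)" if e: "e > 0" for e
  proof -
    \<comment> \<open>tightness\<close>
    have lim: "(\<lambda>i. measure M (cball (0::'a) (real i))) \<longlonglongrightarrow> 1"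
      if "prob_space M" "sets M = sets borel" for M
    proof -
      interpret M: prob_space M by fact
      have "(\<lambda>i. measure M (cball (0::'a) (real i))) \<longlonglongrightarrow> measure M (\<Union>i. cball 0 (real i))"
      proof (rule M.finite_Lim_measure_incseq)
        show "range (\<lambda>i. cball (0::'a) (real i)) \<subseteq> sets M" unfolding that(2) by (auto intro!: borel_closed)
        show "incseq (\<lambda>i. cball (0::'a) (real i))" unfolding incseq_def
          by (intro allI impI subset_cball) simp
      qed
      moreover have "(\<Union>i. cball (0::'a) (real i)) = UNIV"
      proof safe
        fix x :: 'a
        obtain n where "norm x \<le> real n" using real_arch_simple by blast
        then show "x \<in> (\<Union>i. cball 0 (real i))" by auto
      qed auto
      moreover have "space M = UNIV" using sets_eq_imp_space_eq[OF that(2)] by simp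
      ultimately show ?thesis using M.prob_space by simp
    qed
    have "eventually (\<lambda>i. measure \<mu> (cball (0::'a) (real i)) > 1 - e) sequentially"
      using order_tendstoD(1)[OF lim[OF P(1) S(1)], of "1 - e"] e by simp
    moreover have "eventually (\<lambda>i. measure \<nu> (cball (0::'a) (real i)) > 1 - e) sequentially"
      using order_tendstoD(1)[OF lim[OF P(2) S(2)], of "1 - e"] e by simp
    ultimately have "eventually (\<lambda>i. measure \<mu> (cball (0::'a) (real i)) > 1 - e \<and> measure \<nu> (cball (0::'a) (real i)) > 1 - e) sequentially"
      by (rule eventually_conj)
    then obtain N where "\<forall>i\<ge>N. measure \<mu> (cball (0::'a) (real i)) > 1 - e \<and> measure \<nu> (cball (0::'a) (real i)) > 1 - e"
      unfolding eventually_sequentially by blast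
    note NN = spec[OF this, of N]
    then have "measure \<mu> (cball (0::'a) (real N)) > 1 - e \<and> measure \<nu> (cball (0::'a) (real N)) > 1 - e"
      by simp
    then obtain R where R: "measure \<mu> (cball (0::'a) R) > 1 - e" "measure \<nu> (cball (0::'a) R) > 1 - e"
      by blast
    define K where "K = cball (0::'a) R"
    have Kc: "compact K" unfolding K_def by simp
    have tail: "measure \<mu> (- K) < e" "measure \<nu> (- K) < e"
    proof -
      have "measure \<mu> (- K) = 1 - measure \<mu> K"
        using m.prob_compl[of K] S sp unfolding K_def by (simp add: Compl_eq_Diff_UNIV)
      then show "measure \<mu> (- K) < e" using R unfolding K_def by simp
      have "measure \<nu> (- K) = 1 - measure \<nu> K"
        using n.prob_compl[of K] S sp unfolding K_def by (simp add: Compl_eq_Diff_UNIV)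
      then show "measure \<nu> (- K) < e" using R unfolding K_def by simp
    qed
    interpret FR: function_ring_on "trig :: ('a \<Rightarrow> real) set" K
      apply unfold_locales
           apply (rule Kc)
          apply (erule trig_cont)
         apply (erule (1) trig.add)
        apply (erule (1) trig_mult)
       apply (rule trig_const)
      apply (rule trig_separable, assumption)
      done
    obtain g where g: "g \<in> trig" "\<And>x. x \<in> K \<Longrightarrow> \<bar>f x - g x\<bar> < e"
      using FR.Stone_Weierstrass_basic[of f e] continuous_on_subset[OF fc] e by blast
    obtain C where C: "\<And>x. \<bar>g x\<bar> \<le> C" using trig_bounded[OF g(1)] by blast
    define cl where "cl = (\<lambda>y::real. max (-B) (min B y))"
    have "continuous_on {-C..C} cl" unfolding cl_def by (intro continuous_intros)
    then obtain p where p: "real_polynomial_function p" "\<And>y. y \<in> {-C..C} \<Longrightarrow> \<bar>cl y - p y\<bar> < e"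
      using Stone_Weierstrass_real_polynomial_function[of "{-C..C}" cl e] e by blast
    define h where "h = (\<lambda>x. p (g x))"
    have h: "h \<in> trig" unfolding h_def by (rule trig_poly[OF p(1) g(1)])
    have hcl: "\<bar>h x - cl (g x)\<bar> < e" for x
      using p(2)[of "g x"] C[of x] unfolding h_def by (simp add: abs_minus_commute abs_le_iff)
    have fcl: "cl (f x) = f x" for x using fB[of x] unfolding cl_def by (auto simp: abs_le_iff)
    have clB: "\<bar>cl y\<bar> \<le> B" for y unfolding cl_def using B0 by auto
    have pt: "\<bar>f x - h x\<bar> \<le> 2*e + (2*B+e) * indicator (- K) x" for x
    proof (cases "x \<in> K")
      case True
      have "\<bar>f x - cl (g x)\<bar> \<le> \<bar>f x - g x\<bar>" using clamp_lip[of B "f x" "g x"] fcl[of x] unfolding cl_def by simp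
      then show ?thesis using g(2)[OF True] hcl[of x] True by simp
    next
      case False
      then show ?thesis using fB[of x] clB[of "g x"] hcl[of x] e by simp
    qed
    have bound: "\<bar>(\<integral>x. f x \<partial>M) - (\<integral>x. h x \<partial>M)\<bar> \<le> 2*e + (2*B+e)*e"
      if "prob_space M" "sets M = sets borel" "measure M (- K) < e"
         "integrable M h" "f \<in> borel_measurable M" for M
    proof -
      interpret M: prob_space M by fact
      have spM: "space M = UNIV" using sets_eq_imp_space_eq[OF that(2)] by simp
      have intf: "integrable M f" by (rule M.integrable_const_bound[of _ B]) (use fB that in auto)
      have Km: "- K \<in> sets M" using that(2) unfolding K_def by simp
      have intb: "integrable M (\<lambda>x. 2*e + (2*B+e) * indicator (- K) x)"
        using Km by (intro Bochner_Integration.integrable_add integrable_mult_right integrable_real_indicator) (auto simp: M.emeasure_finite less_top[symmetric])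
      have "\<bar>(\<integral>x. f x \<partial>M) - (\<integral>x. h x \<partial>M)\<bar> = \<bar>\<integral>x. f x - h x \<partial>M\<bar>"
        using intf that(4) by simp
      also have "\<dots> \<le> (\<integral>x. \<bar>f x - h x\<bar> \<partial>M)" by (rule integral_abs_bound)
      also have "\<dots> \<le> (\<integral>x. 2*e + (2*B+e) * indicator (- K) x \<partial>M)"
      proof (rule integral_mono)
        show "integrable M (\<lambda>x. \<bar>f x - h x\<bar>)" using intf that(4) by auto
        show "integrable M (\<lambda>x. 2*e + (2*B+e) * indicator (- K) x)" by (rule intb)
        show "\<bar>f x - h x\<bar> \<le> 2*e + (2*B+e) * indicator (- K) x" for x by (rule pt)
      qed
      also have "\<dots> = 2*e + (2*B+e) * measure M (- K)"
      proof -
        have ii: "integrable M (indicat_real (- K))"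
          using Km by (intro integrable_real_indicator) (auto simp: M.emeasure_finite less_top[symmetric])
        have "(\<integral>x. 2*e + (2*B+e) * indicator (- K) x \<partial>M) = (\<integral>x. 2*e \<partial>M) + (\<integral>x. (2*B+e) * indicator (- K) x \<partial>M)"
          using ii by (intro Bochner_Integration.integral_add) auto
        also have "\<dots> = 2*e + (2*B+e) * measure M (- K)"
          using spM M.prob_space by simp
        finally show ?thesis .
      qed
      also have "\<dots> \<le> 2*e + (2*B+e) * e"
        using that(3) B0 e by (intro add_left_mono mult_left_mono) auto
      finally show ?thesis .
    qed
    have b1: "\<bar>(\<integral>x. f x \<partial>\<mu>) - (\<integral>x. h x \<partial>\<mu>)\<bar> \<le> 2*e + (2*B+e)*e"
      by (rule bound) (use P S tail mf trig_integral_eq[OF P S H h] in auto)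
    have b2: "\<bar>(\<integral>x. f x \<partial>\<nu>) - (\<integral>x. h x \<partial>\<nu>)\<bar> \<le> 2*e + (2*B+e)*e"
      by (rule bound) (use P S tail mf trig_integral_eq[OF P S H h] in auto)
    have "(\<integral>x. h x \<partial>\<mu>) = (\<integral>x. h x \<partial>\<nu>)" using trig_integral_eq[OF P S H h] by simp
    from abs_aux[OF this b1 b2] show ?thesis .
  qed
  show ?thesis
  proof (rule ccontr)
    assume ne: "(\<integral>x. f x \<partial>\<mu>) \<noteq> (\<integral>x. f x \<partial>\<nu>)"
    define d where "d = \<bar>(\<integral>x. f x \<partial>\<mu>) - (\<integral>x. f x \<partial>\<nu>)\<bar>"
    have d: "d > 0" using ne unfolding d_def by simp
    define e where "e = min 1 (d / (2 * (4 + 2*B)))"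
    have e: "e > 0" "e \<le> 1" "e \<le> d / (2 * (4 + 2*B))" using d B0 unfolding e_def by auto
    have "2 * (2*e + (2*B+e)*e) \<le> 2 * (2*e + (2*B+1)*e)"
      using e B0 by (intro mult_left_mono add_left_mono mult_right_mono) auto
    also have "\<dots> = e * (2 * (4 + 2*B) - 2)" by (simp add: algebra_simps)
    also have "\<dots> < e * (2 * (4 + 2*B))" using e by simp
    also have "\<dots> \<le> d / (2 * (4 + 2*B)) * (2 * (4 + 2*B))"
      using e(3) B0 by (intro mult_right_mono) auto
    also have "\<dots> = d" using B0 by simp
    finally show False using key[OF e(1)] unfolding d_def by linarith
  qed
qed

lemma bm_transfer: "sets M = sets borel \<Longrightarrow> f \<in> borel_measurable borel \<Longrightarrow> f \<in> borel_measurable M"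
  using measurable_cong_sets[of M borel borel borel] by simp

lemma open_measure_eq:
  fixes \<mu> \<nu> :: "'a::euclidean_space measure"
  assumes P: "prob_space \<mu>" "prob_space \<nu>" and S: "sets \<mu> = sets borel" "sets \<nu> = sets borel"
    and H: "\<And>u c. (\<integral>x. cos (u \<bullet> x + c) \<partial>\<mu>) = (\<integral>x. cos (u \<bullet> x + c) \<partial>\<nu>)"
    and U: "open U"
  shows "measure \<mu> U = measure \<nu> U"
proof (cases "U = UNIV")
  case True
  interpret m: prob_space \<mu> by fact
  interpret n: prob_space \<nu> by fact
  have "space \<mu> = UNIV" "space \<nu> = UNIV"
    using sets_eq_imp_space_eq[OF S(1)] sets_eq_imp_space_eq[OF S(2)] by simp_all
  then show ?thesis using True m.prob_space n.prob_space by simp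
next
  case False
  define F where "F = - U"
  have F: "closed F" "F \<noteq> {}" using U False unfolding F_def by auto
  define s where "s = (\<lambda>(n::nat) x. min 1 (real n * infdist x F))"
  have sc: "continuous_on UNIV (s n)" for n
    unfolding s_def by (auto intro!: continuous_intros)
  have sb: "\<bar>s n x\<bar> \<le> 1" for n x
    unfolding s_def using infdist_nonneg[of x F] by auto
  have conv: "(\<lambda>n. s n x) \<longlonglongrightarrow> indicator U x" for x
  proof (cases "x \<in> U")
    case True
    then have "x \<notin> F" unfolding F_def by simp
    then have d: "infdist x F > 0" using in_closed_iff_infdist_zero[OF F, of x] infdist_nonneg[of x F] by auto
    obtain N where N: "1 / infdist x F < real N" using reals_Archimedean2 by blast
    have "eventually (\<lambda>n. s n x = 1) sequentially"
      unfolding eventually_sequentially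
    proof (intro exI allI impI)
      fix n assume "N \<le> n"
      then have "1 / infdist x F < real n" using N by linarith
      then have "1 < real n * infdist x F" using d by (simp add: field_simps)
      then show "s n x = 1" unfolding s_def by simp
    qed
    then have "(\<lambda>n. s n x) \<longlonglongrightarrow> 1" by (rule tendsto_eventually)
    then show ?thesis using True by simp
  next
    case False
    then have "x \<in> F" unfolding F_def by simp
    then have "infdist x F = 0" using in_closed_iff_infdist_zero[OF F] by simp
    then show ?thesis using False unfolding s_def by simp
  qed
  have lim: "(\<lambda>n. \<integral>x. s n x \<partial>M) \<longlonglongrightarrow> measure M U"
    if "prob_space M" "sets M = sets borel" for M
  proof -
    interpret M: prob_space M by fact
    have spM: "space M = UNIV" using sets_eq_imp_space_eq[OF that(2)] by simp
    have mU: "U \<in> sets M" unfolding that(2) using U by simp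
    have "(\<lambda>n. \<integral>x. s n x \<partial>M) \<longlonglongrightarrow> (\<integral>x. indicator U x \<partial>M)"
    proof (rule integral_dominated_convergence[where w="\<lambda>_. 1"])
      show "indicat_real U \<in> borel_measurable M" using mU by simp
      show "s n \<in> borel_measurable M" for n
        using bm_transfer[OF that(2) borel_measurable_continuous_onI[OF sc[of n]]] .
      show "integrable M (\<lambda>_. 1::real)" by simp
      show "AE x in M. (\<lambda>n. s n x) \<longlonglongrightarrow> indicat_real U x" using conv by simp
      show "AE x in M. norm (s n x) \<le> 1" for n using sb by simp
    qed
    then show ?thesis using spM by simp
  qed
  have eq: "(\<integral>x. s n x \<partial>\<mu>) = (\<integral>x. s n x \<partial>\<nu>)" for n
    by (rule bcont_integral_eq[OF P S H sc sb])
  show ?thesis using LIMSEQ_unique[OF lim[OF P(1) S(1)]] lim[OF P(2) S(2)] eq by simp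
qed

lemma cos_integral_char:
  fixes \<mu> :: "'a::euclidean_space measure"
  assumes P: "prob_space \<mu>" and S: "sets \<mu> = sets borel"
  shows "(\<integral>x. cos (u \<bullet> x + c) \<partial>\<mu>) = Re (exp (\<i> * complex_of_real c) * (CLINT x|\<mu>. exp (\<i> * complex_of_real (u \<bullet> x))))"
proof -
  have "cos (u \<bullet> x + c) = Re (exp (\<i> * complex_of_real c) * exp (\<i> * complex_of_real (u \<bullet> x)))" for x
  proof -
    have "exp (\<i> * complex_of_real c) * exp (\<i> * complex_of_real (u \<bullet> x)) = exp (\<i> * complex_of_real (u \<bullet> x + c))"
      by (simp add: exp_add[symmetric] algebra_simps)
    then show ?thesis by (simp add: Re_exp)
  qed
  then have "(\<integral>x. cos (u \<bullet> x + c) \<partial>\<mu>) = (\<integral>x. Re (exp (\<i> * complex_of_real c) * exp (\<i> * complex_of_real (u \<bullet> x))) \<partial>\<mu>)"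
    by simp
  also have "\<dots> = Re (CLINT x|\<mu>. exp (\<i> * complex_of_real c) * exp (\<i> * complex_of_real (u \<bullet> x)))"
  proof (rule integral_Re)
    interpret m: prob_space \<mu> by fact
    have "(\<lambda>x. exp (\<i> * complex_of_real c) * exp (\<i> * complex_of_real (u \<bullet> x))) \<in> borel_measurable borel"
      by (intro borel_measurable_continuous_onI continuous_intros)
    then have mm: "(\<lambda>x. exp (\<i> * complex_of_real c) * exp (\<i> * complex_of_real (u \<bullet> x))) \<in> borel_measurable \<mu>"
      by (rule bm_transfer[OF S])
    show "integrable \<mu> (\<lambda>x. exp (\<i> * complex_of_real c) * exp (\<i> * complex_of_real (u \<bullet> x)))"
    proof (rule m.integrable_const_bound[of _ 1])
      show "AE x in \<mu>. norm (exp (\<i> * complex_of_real c) * exp (\<i> * complex_of_real (u \<bullet> x))) \<le> 1"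
        by (simp add: norm_mult)
    qed (rule mm)
  qed
  also have "\<dots> = Re (exp (\<i> * complex_of_real c) * (CLINT x|\<mu>. exp (\<i> * complex_of_real (u \<bullet> x))))"
    by (simp only: integral_mult_right_zero)
  finally show ?thesis .
qed

theorem char_unique:
  fixes \<mu> \<nu> :: "'a::euclidean_space measure"
  assumes P: "prob_space \<mu>" "prob_space \<nu>" and S: "sets \<mu> = sets borel" "sets \<nu> = sets borel"
    and H: "\<And>u. (CLINT x|\<mu>. exp (\<i> * complex_of_real (u \<bullet> x))) = (CLINT x|\<nu>. exp (\<i> * complex_of_real (u \<bullet> x)))"
  shows "\<mu> = \<nu>"
proof -
  interpret m: prob_space \<mu> by fact
  interpret n: prob_space \<nu> by fact
  have H': "\<And>u c. (\<integral>x. cos (u \<bullet> x + c) \<partial>\<mu>) = (\<integral>x. cos (u \<bullet> x + c) \<partial>\<nu>)"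
    unfolding cos_integral_char[OF P(1) S(1)] cos_integral_char[OF P(2) S(2)] H ..
  show ?thesis
  proof (rule measure_eqI_generator_eq[where E="{S. open S}" and \<Omega>=UNIV and A="\<lambda>_. UNIV"])
    show "Int_stable {S::'a set. open S}" by (auto simp: Int_stable_def)
    show "{S::'a set. open S} \<subseteq> Pow UNIV" by simp
    show "sets \<mu> = sigma_sets UNIV {S. open S}" using S(1) sets_borel by simp
    show "sets \<nu> = sigma_sets UNIV {S. open S}" using S(2) sets_borel by simp
    show "range (\<lambda>_. UNIV) \<subseteq> {S::'a set. open S}" by simp
    show "(\<Union>i::nat. UNIV) = (UNIV::'a set)" by simp
    show "emeasure \<mu> UNIV \<noteq> \<infinity>" by simp
    fix X :: "'a set" assume "X \<in> {S. open S}"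
    then have X: "open X" by simp
    have "X \<in> sets \<mu>" "X \<in> sets \<nu>" using X S by auto
    then show "emeasure \<mu> X = emeasure \<nu> X"
      using open_measure_eq[OF P S H' X] by (simp add: m.emeasure_eq_measure n.emeasure_eq_measure)
  qed
qed

definition cf :: "'w measure \<Rightarrow> ('w \<Rightarrow> 'a::euclidean_space) \<Rightarrow> 'a \<Rightarrow> complex" where
  "cf M Z u = (CLINT \<omega>|M. exp (\<i> * complex_of_real (u \<bullet> Z \<omega>)))"

lemma iexp_inner_bm: "(\<lambda>x::'a::euclidean_space. exp (\<i> * complex_of_real (u \<bullet> x))) \<in> borel_measurable borel"
  by (intro borel_measurable_continuous_onI continuous_intros)

lemma cf_distr:
  fixes Z :: "'w \<Rightarrow> 'a::euclidean_space"
  assumes "Z \<in> borel_measurable M"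
  shows "(CLINT x|distr M borel Z. exp (\<i> * complex_of_real (u \<bullet> x))) = cf M Z u"
  unfolding cf_def by (rule integral_distr[OF assms iexp_inner_bm])

lemma cf_integrable:
  fixes Z :: "'w \<Rightarrow> 'a::euclidean_space"
  assumes "prob_space M" "Z \<in> borel_measurable M"
  shows "integrable M (\<lambda>\<omega>. exp (\<i> * complex_of_real (u \<bullet> Z \<omega>)))"
proof -
  interpret prob_space M by fact
  show ?thesis
  proof (rule integrable_const_bound[of _ 1])
    show "AE x in M. norm (exp (\<i> * complex_of_real (u \<bullet> Z x))) \<le> 1" by simp
    show "(\<lambda>\<omega>. exp (\<i> * complex_of_real (u \<bullet> Z \<omega>))) \<in> borel_measurable M"
      using measurable_compose[OF assms(2) iexp_inner_bm] by (simp add: comp_def)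
  qed
qed

lemma cf_norm_le:
  fixes Z :: "'w \<Rightarrow> 'a::euclidean_space"
  assumes "prob_space M" "Z \<in> borel_measurable M"
  shows "norm (cf M Z u) \<le> 1"
proof -
  interpret prob_space M by fact
  have "norm (cf M Z u) \<le> (\<integral>\<omega>. norm (exp (\<i> * complex_of_real (u \<bullet> Z \<omega>))) \<partial>M)"
    unfolding cf_def by (rule integral_norm_bound)
  also have "\<dots> = 1" by (simp add: prob_space)
  finally show ?thesis .
qed

lemma cf_AE_cong:
  fixes Z :: "'w \<Rightarrow> 'a::euclidean_space"
  assumes "Z \<in> borel_measurable M" "W \<in> borel_measurable M" "AE \<omega> in M. Z \<omega> = W \<omega>"
  shows "cf M Z u = cf M W u"
  unfolding cf_def
proof (rule integral_cong_AE)
  show "(\<lambda>\<omega>. exp (\<i> * complex_of_real (u \<bullet> Z \<omega>))) \<in> borel_measurable M"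
    using measurable_compose[OF assms(1) iexp_inner_bm] by (simp add: comp_def)
  show "(\<lambda>\<omega>. exp (\<i> * complex_of_real (u \<bullet> W \<omega>))) \<in> borel_measurable M"
    using measurable_compose[OF assms(2) iexp_inner_bm] by (simp add: comp_def)
  show "AE x in M. exp (\<i> * complex_of_real (u \<bullet> Z x)) = exp (\<i> * complex_of_real (u \<bullet> W x))"
    using assms(3) by (rule AE_mp) simp
qed

lemma law_eq_cf:
  fixes Z :: "'w \<Rightarrow> 'a::euclidean_space"
  assumes "prob_space M" "prob_space N" "Z \<in> borel_measurable M" "W \<in> borel_measurable N"
    and "\<And>u. cf M Z u = cf N W u"
  shows "distr M borel Z = distr N borel W"
proof (rule char_unique)
  show "prob_space (distr M borel Z)" using prob_space.prob_space_distr[OF assms(1,3)] .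
  show "prob_space (distr N borel W)" using prob_space.prob_space_distr[OF assms(2,4)] .
  show "sets (distr M borel Z) = sets borel" "sets (distr N borel W) = sets borel" by simp_all
  show "(CLINT x|distr M borel Z. exp (\<i> * complex_of_real (u \<bullet> x))) =
        (CLINT x|distr N borel W. exp (\<i> * complex_of_real (u \<bullet> x)))" for u
    using cf_distr[OF assms(3)] cf_distr[OF assms(4)] assms(5) by simp
qed

lemma cf_const0: "prob_space M \<Longrightarrow> cf M (\<lambda>_. 0::'a::euclidean_space) u = 1"
  unfolding cf_def by (simp add: prob_space.prob_space)

lemma cf_sum_PiM:
  fixes Z :: "'w \<Rightarrow> 'a::euclidean_space"
  assumes P: "prob_space M" and Zm: "Z \<in> borel_measurable M"
  shows "cf (PiM {..<n} (\<lambda>_. M)) (\<lambda>\<omega>. \<Sum>i<n. Z (\<omega> i)) u = (cf M Z u) ^ n"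
proof -
  interpret prob_space M by fact
  interpret PP: product_prob_space "\<lambda>_::nat. M"
    by unfold_locales
  have "cf (PiM {..<n} (\<lambda>_. M)) (\<lambda>\<omega>. \<Sum>i<n. Z (\<omega> i)) u
      = (CLINT \<omega>|PiM {..<n} (\<lambda>_. M). (\<Prod>i\<in>{..<n}. exp (\<i> * complex_of_real (u \<bullet> Z (\<omega> i)))))"
    unfolding cf_def
    by (simp add: inner_sum_right sum_distrib_left exp_sum)
  also have "\<dots> = (\<Prod>i\<in>{..<n}. cf M Z u)"
    unfolding cf_def
    by (rule PP.product_integral_prod) (auto intro: cf_integrable[OF P Zm])
  finally show ?thesis by simp
qed

lemma fdd_single: "fdd M W [t] = distr M (PiM {..<1} (\<lambda>_. borel)) (\<lambda>\<omega>. \<lambda>i\<in>{..<1}. W t \<omega>)"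
proof -
  have "(\<lambda>\<omega>. \<lambda>i\<in>{..<length [t]}. W ([t] ! i) \<omega>) = (\<lambda>\<omega>. \<lambda>i\<in>{..<1::nat}. W t \<omega>)"
    by (auto simp: restrict_def fun_eq_iff)
  then show ?thesis unfolding fdd_def by simp
qed

lemma fdd1_char:
  fixes Z :: "'w \<Rightarrow> 'a::euclidean_space"
  assumes Zm: "Z \<in> borel_measurable N"
  shows "(CLINT f|distr N (PiM {..<1} (\<lambda>_. borel)) (\<lambda>\<omega>. \<lambda>i\<in>{..<1::nat}. Z \<omega>). exp (\<i> * complex_of_real (u \<bullet> f 0))) = cf N Z u"
proof -
  have m1: "(\<lambda>\<omega>. \<lambda>i\<in>{..<1::nat}. Z \<omega>) \<in> measurable N (PiM {..<1} (\<lambda>_. borel))"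
    by (rule measurable_restrict) (rule Zm)
  have m2: "(\<lambda>f. exp (\<i> * complex_of_real (u \<bullet> f (0::nat)))) \<in> borel_measurable (PiM {..<1} (\<lambda>_. borel::'a measure))"
    using measurable_compose[OF measurable_component_singleton[of 0 "{..<1::nat}" "\<lambda>_. borel::'a measure"] iexp_inner_bm[of u]]
    by simp
  show ?thesis
    unfolding cf_def by (subst integral_distr[OF m1 m2]) simp
qed

lemma idt_char:
  fixes X :: "real \<Rightarrow> 'w \<Rightarrow> 'a::euclidean_space"
  assumes IDT: "alpha_IDT \<alpha> M X" and n: "n \<ge> 1" and t: "t \<ge> 0"
  shows "cf M (X (real n powr (1/\<alpha>) * t)) u = (cf M (X t) u) ^ n"
proof -
  have proc: "is_process M X" using IDT unfolding alpha_IDT_def by simp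
  then have P: "prob_space M" and Xm: "\<And>s. s \<ge> 0 \<Longrightarrow> X s \<in> borel_measurable M"
    unfolding is_process_def by auto
  have eq: "fdd M (\<lambda>t \<omega>. X (real n powr (1 / \<alpha>) * t) \<omega>) [t] =
      fdd (PiM {..<n} (\<lambda>_. M)) (\<lambda>t \<omega>. \<Sum>i<n. X t (\<omega> i)) [t]"
    using IDT n t unfolding alpha_IDT_def eq_law_def by auto
  have nt: "real n powr (1 / \<alpha>) * t \<ge> 0" using t by simp
  have m1: "X (real n powr (1/\<alpha>) * t) \<in> borel_measurable M" by (rule Xm[OF nt])
  have m2: "(\<lambda>\<omega>. \<Sum>i<n. X t (\<omega> i)) \<in> borel_measurable (PiM {..<n} (\<lambda>_. M))"
  proof (rule borel_measurable_sum)
    fix i assume "i \<in> {..<n}"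
    then show "(\<lambda>\<omega>. X t (\<omega> i)) \<in> borel_measurable (PiM {..<n} (\<lambda>_. M))"
      using measurable_compose[OF measurable_component_singleton[of i "{..<n}" "\<lambda>_. M"] Xm[OF t]] by simp
  qed
  have "cf M (X (real n powr (1/\<alpha>) * t)) u =
      (CLINT f|fdd M (\<lambda>t \<omega>. X (real n powr (1 / \<alpha>) * t) \<omega>) [t]. exp (\<i> * complex_of_real (u \<bullet> f 0)))"
    unfolding fdd_single using fdd1_char[OF m1] by simp
  also have "\<dots> = (CLINT f|fdd (PiM {..<n} (\<lambda>_. M)) (\<lambda>t \<omega>. \<Sum>i<n. X t (\<omega> i)) [t]. exp (\<i> * complex_of_real (u \<bullet> f 0)))"
    using eq by simp
  also have "\<dots> = cf (PiM {..<n} (\<lambda>_. M)) (\<lambda>\<omega>. \<Sum>i<n. X t (\<omega> i)) u"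
    unfolding fdd_single using fdd1_char[OF m2] by simp
  also have "\<dots> = (cf M (X t) u) ^ n" by (rule cf_sum_PiM[OF P Xm[OF t]])
  finally show ?thesis .
qed

lemma isCont_cf_scale:
  fixes Z :: "'w \<Rightarrow> 'a::euclidean_space"
  assumes P: "prob_space M" and Zm: "Z \<in> borel_measurable M"
  shows "isCont (\<lambda>r. cf M Z (r *\<^sub>R u)) r0"
  unfolding continuous_at_sequentially
proof safe
  interpret prob_space M by fact
  fix S :: "nat \<Rightarrow> real" assume S: "S \<longlonglongrightarrow> r0"
  have mm: "(\<lambda>\<omega>. exp (\<i> * complex_of_real (v \<bullet> Z \<omega>))) \<in> borel_measurable M" for v
    using measurable_compose[OF Zm iexp_inner_bm[of v]] by simp
  show "((\<lambda>r. cf M Z (r *\<^sub>R u)) \<circ> S) \<longlonglongrightarrow> cf M Z (r0 *\<^sub>R u)"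
    unfolding comp_def cf_def
  proof (rule integral_dominated_convergence[where w="\<lambda>_. 1"])
    show "(\<lambda>\<omega>. exp (\<i> * complex_of_real ((r0 *\<^sub>R u) \<bullet> Z \<omega>))) \<in> borel_measurable M" by (rule mm)
    show "(\<lambda>\<omega>. exp (\<i> * complex_of_real ((S i *\<^sub>R u) \<bullet> Z \<omega>))) \<in> borel_measurable M" for i by (rule mm)
    show "integrable M (\<lambda>_. 1::real)" by simp
    show "AE x in M. norm (exp (\<i> * complex_of_real ((S i *\<^sub>R u) \<bullet> Z x))) \<le> 1" for i by simp
    show "AE x in M. (\<lambda>i. exp (\<i> * complex_of_real ((S i *\<^sub>R u) \<bullet> Z x))) \<longlonglongrightarrow> exp (\<i> * complex_of_real ((r0 *\<^sub>R u) \<bullet> Z x))"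
      by (intro AE_I2 tendsto_intros S)
  qed
qed

lemma cf_zero_arg: "prob_space M \<Longrightarrow> cf M Z 0 = 1"
  unfolding cf_def by (simp add: prob_space.prob_space)

lemma idempotent_cf_one:
  fixes Z :: "'w \<Rightarrow> 'a::euclidean_space"
  assumes P: "prob_space M" and Zm: "Z \<in> borel_measurable M"
    and idem: "\<And>u. cf M Z u = (cf M Z u)^2"
  shows "cf M Z u = 1"
proof -
  define h where "h = (\<lambda>r. cf M Z (r *\<^sub>R u))"
  have h01: "h r = 0 \<or> h r = 1" for r
  proof -
    have "h r * (h r - 1) = 0" using idem[of "r *\<^sub>R u"] unfolding h_def power2_eq_square
      by (simp add: algebra_simps)
    then show ?thesis by simp
  qed
  have h0: "h 0 = 1" unfolding h_def using cf_zero_arg[OF P] by simp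
  show ?thesis
  proof (rule ccontr)
    assume "cf M Z u \<noteq> 1"
    then have h1: "h 1 = 0" using h01[of 1] unfolding h_def by simp
    have "\<exists>x. 0 \<le> x \<and> x \<le> 1 \<and> Re (h x) = 1/2"
    proof (rule IVT2)
      show "Re (h 1) \<le> 1/2" using h1 by simp
      show "1/2 \<le> Re (h 0)" using h0 by simp
      show "(0::real) \<le> 1" by simp
      show "\<forall>x. 0 \<le> x \<and> x \<le> 1 \<longrightarrow> isCont (\<lambda>x. Re (h x)) x"
        unfolding h_def using isCont_cf_scale[OF P Zm] by (auto intro: continuous_intros)
    qed
    then obtain x where "Re (h x) = 1/2" by blast
    then show False using h01[of x] by auto
  qed
qed

lemma X0_law:
  fixes X :: "real \<Rightarrow> 'w \<Rightarrow> 'a::euclidean_space"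
  assumes IDT: "alpha_IDT \<alpha> M X"
  shows "distr M borel (X 0) = distr M borel (\<lambda>_. 0)" and "AE \<omega> in M. X 0 \<omega> = 0"
proof -
  have proc: "is_process M X" using IDT unfolding alpha_IDT_def by simp
  then have P: "prob_space M" and Xm: "\<And>s. s \<ge> 0 \<Longrightarrow> X s \<in> borel_measurable M"
    unfolding is_process_def by auto
  interpret prob_space M by fact
  have X0m: "X 0 \<in> borel_measurable M" using Xm by simp
  have "cf M (X 0) u = 1" for u
  proof (rule idempotent_cf_one[OF P X0m])
    fix v
    show "cf M (X 0) v = (cf M (X 0) v)^2"
      using idt_char[OF IDT, of 2 0 v] by simp
  qed
  then show law: "distr M borel (X 0) = distr M borel (\<lambda>_. 0)"
    by (intro law_eq_cf[OF P P X0m]) (auto simp: cf_const0[OF P])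
  have "emeasure (distr M borel (X 0)) (- {0}) = emeasure (distr M borel (\<lambda>_. 0::'a)) (- {0})"
    using law by simp
  then have "emeasure M {\<omega>\<in>space M. X 0 \<omega> \<noteq> 0} = 0"
    using X0m by (simp add: emeasure_distr vimage_def Int_def conj_commute)
  then show "AE \<omega> in M. X 0 \<omega> = 0"
    using X0m by (subst AE_iff_measurable[of "{\<omega>\<in>space M. X 0 \<omega> \<noteq> 0}"]) auto
qed

lemma iexp_diff_le: "norm (exp (\<i> * complex_of_real a) - exp (\<i> * complex_of_real b)) \<le> \<bar>a - b\<bar>"
proof -
  have "exp (\<i> * complex_of_real a) - exp (\<i> * complex_of_real b)
      = exp (\<i> * complex_of_real b) * (exp (\<i> * complex_of_real (a - b)) - 1)"
    by (simp add: algebra_simps exp_add[symmetric])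
  then have "norm (exp (\<i> * complex_of_real a) - exp (\<i> * complex_of_real b))
      = norm (exp (\<i> * complex_of_real (a - b)) - 1)"
    by (simp add: norm_mult)
  also have "\<dots> \<le> \<bar>a - b\<bar>"
    using iexp_approx1[of "a - b" 0] by simp
  finally show ?thesis .
qed

lemma iexp_diff_le2: "norm (exp (\<i> * complex_of_real a) - exp (\<i> * complex_of_real b)) \<le> 2"
proof -
  have "norm (exp (\<i> * complex_of_real a) - exp (\<i> * complex_of_real b))
     \<le> norm (exp (\<i> * complex_of_real a)) + norm (exp (\<i> * complex_of_real b))"
    by (rule norm_triangle_ineq4)
  then show ?thesis by simp
qed

lemma mul_div_cancel_aux: "(a::real) \<noteq> 0 \<Longrightarrow> a * (e / (2 * a)) = e / 2"
  by (simp add: field_simps)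

lemma eventually_within_self: "eventually (\<lambda>x. x \<in> s) (at a within s)"
  unfolding eventually_at_filter by simp

lemma cf_tendsto_prob:
  fixes Z :: "real \<Rightarrow> 'w \<Rightarrow> 'a::euclidean_space"
  assumes P: "prob_space M" and Zm: "\<And>s. s \<in> A \<Longrightarrow> Z s \<in> borel_measurable M" and tA: "t \<in> A"
    and conv: "\<And>\<epsilon>. \<epsilon> > 0 \<Longrightarrow> ((\<lambda>s. measure M {\<omega>\<in>space M. dist (Z s \<omega>) (Z t \<omega>) > \<epsilon>}) \<longlongrightarrow> 0) (at t within A)"
  shows "((\<lambda>s. cf M (Z s) u) \<longlongrightarrow> cf M (Z t) u) (at t within A)"
proof (rule tendstoI)
  interpret prob_space M by fact
  fix e :: real assume e: "e > 0"
  define d where "d = e / (2 * (norm u + 1))"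
  have "2 * (norm u + 1) > 0" by (simp add: add_nonneg_pos)
  then have d: "d > 0" unfolding d_def using e by (intro divide_pos_pos)
  have ud: "norm u * d \<le> e / 2"
  proof -
    have "norm u * d \<le> (norm u + 1) * d" using d by (intro mult_right_mono) auto
    also have "\<dots> = e / 2"
    proof -
      have "norm u + 1 \<noteq> 0" using norm_ge_zero[of u] by linarith
      then have "(norm u + 1) * (e / (2 * (norm u + 1))) = e / 2" by (rule mul_div_cancel_aux)
      then show ?thesis unfolding d_def .
    qed
    finally show ?thesis .
  qed
  have ev1: "eventually (\<lambda>s. measure M {\<omega>\<in>space M. dist (Z s \<omega>) (Z t \<omega>) > d} < e / 4) (at t within A)"
    using order_tendstoD(2)[OF conv[OF d], of "e/4"] e by simp
  have Ztm: "Z t \<in> borel_measurable M" by (rule Zm[OF tA])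
  have main: "dist (cf M (Z s) u) (cf M (Z t) u) < e"
    if sA: "s \<in> A" and sm: "measure M {\<omega>\<in>space M. dist (Z s \<omega>) (Z t \<omega>) > d} < e / 4" for s
  proof -
    have Zsm: "Z s \<in> borel_measurable M" by (rule Zm[OF sA])
    define B where "B = {\<omega>\<in>space M. dist (Z s \<omega>) (Z t \<omega>) > d}"
    have Bm: "B \<in> sets M" unfolding B_def using Zsm Ztm by measurable
    have i1: "integrable M (\<lambda>\<omega>. exp (\<i> * complex_of_real (u \<bullet> Z s \<omega>)))" by (rule cf_integrable[OF P Zsm])
    have i2: "integrable M (\<lambda>\<omega>. exp (\<i> * complex_of_real (u \<bullet> Z t \<omega>)))" by (rule cf_integrable[OF P Ztm])
    have pt: "norm (exp (\<i> * complex_of_real (u \<bullet> Z s \<omega>)) - exp (\<i> * complex_of_real (u \<bullet> Z t \<omega>)))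
        \<le> norm u * d + 2 * indicator B \<omega>" if \<omega>: "\<omega> \<in> space M" for \<omega>
    proof (cases "\<omega> \<in> B")
      case True
      have "0 \<le> norm u * d" using d by simp
      then show ?thesis using iexp_diff_le2[of "u \<bullet> Z s \<omega>" "u \<bullet> Z t \<omega>"] True by simp
    next
      case False
      then have dd: "dist (Z s \<omega>) (Z t \<omega>) \<le> d" unfolding B_def using \<omega> by auto
      have "\<bar>u \<bullet> Z s \<omega> - u \<bullet> Z t \<omega>\<bar> = \<bar>u \<bullet> (Z s \<omega> - Z t \<omega>)\<bar>" by (simp add: inner_diff_right)
      also have "\<dots> \<le> norm u * norm (Z s \<omega> - Z t \<omega>)" by (rule Cauchy_Schwarz_ineq2)
      also have "\<dots> \<le> norm u * d" using dd by (intro mult_left_mono) (auto simp: dist_norm)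
      finally show ?thesis using iexp_diff_le[of "u \<bullet> Z s \<omega>" "u \<bullet> Z t \<omega>"] False by simp
    qed
    have ib: "integrable M (\<lambda>\<omega>. norm u * d + 2 * indicator B \<omega>)"
      using Bm by (intro Bochner_Integration.integrable_add integrable_mult_right integrable_real_indicator)
        (auto simp: emeasure_finite less_top[symmetric])
    have "dist (cf M (Z s) u) (cf M (Z t) u) = norm (CLINT \<omega>|M. exp (\<i> * complex_of_real (u \<bullet> Z s \<omega>)) - exp (\<i> * complex_of_real (u \<bullet> Z t \<omega>)))"
      unfolding cf_def dist_norm using i1 i2 by simp
    also have "\<dots> \<le> (\<integral>\<omega>. norm (exp (\<i> * complex_of_real (u \<bullet> Z s \<omega>)) - exp (\<i> * complex_of_real (u \<bullet> Z t \<omega>))) \<partial>M)"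
      by (rule integral_norm_bound)
    also have "\<dots> \<le> (\<integral>\<omega>. norm u * d + 2 * indicator B \<omega> \<partial>M)"
    proof (rule integral_mono)
      show "integrable M (\<lambda>\<omega>. norm (exp (\<i> * complex_of_real (u \<bullet> Z s \<omega>)) - exp (\<i> * complex_of_real (u \<bullet> Z t \<omega>))))"
        using i1 i2 by auto
      show "integrable M (\<lambda>\<omega>. norm u * d + 2 * indicator B \<omega>)" by (rule ib)
    qed (rule pt)
    also have "\<dots> = norm u * d + 2 * measure M B"
    proof -
      have ii: "integrable M (indicat_real B)"
        using Bm by (intro integrable_real_indicator) (auto simp: emeasure_finite less_top[symmetric])
      have "(\<integral>\<omega>. norm u * d + 2 * indicator B \<omega> \<partial>M) = (\<integral>\<omega>. norm u * d \<partial>M) + (\<integral>\<omega>. 2 * indicator B \<omega> \<partial>M)"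
        using ii by (intro Bochner_Integration.integral_add) auto
      also have "\<dots> = norm u * d + 2 * measure M B"
        using Bm prob_space sets.sets_into_space[OF Bm] by (simp add: Int_absorb2)
      finally show ?thesis .
    qed
    also have "\<dots> < e" using ud sm unfolding B_def by simp
    finally show ?thesis .
  qed
  show "eventually (\<lambda>s. dist (cf M (Z s) u) (cf M (Z t) u) < e) (at t within A)"
    using eventually_conj[OF ev1 eventually_within_self[of A t]] by (rule eventually_mono) (auto intro: main)
qed

definition tc :: "real \<Rightarrow> (real \<Rightarrow> 'w \<Rightarrow> 'a) \<Rightarrow> real \<Rightarrow> 'w \<Rightarrow> 'a" where
  "tc \<alpha> X = (\<lambda>t. X (t powr (1/\<alpha>)))"

lemma powr_inv_cancel: "\<alpha> > 0 \<Longrightarrow> t \<ge> 0 \<Longrightarrow> (t powr \<alpha>) powr (1/\<alpha>) = (t::real)"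
  by (simp add: powr_powr powr_one)

lemma tc_process:
  assumes "\<alpha> > 0" "is_process M X"
  shows "is_process M (tc \<alpha> X)"
  using assms unfolding is_process_def tc_def by auto

lemma tc_eq_law:
  fixes X :: "real \<Rightarrow> 'w \<Rightarrow> 'a::euclidean_space"
  assumes a: "\<alpha> > 0"
  shows "eq_law M X M (\<lambda>t. tc \<alpha> X (t powr \<alpha>))"
  unfolding eq_law_def
proof (intro allI impI)
  fix ts :: "real list" assume ts: "\<forall>t\<in>set ts. 0 \<le> t"
  have "(\<lambda>\<omega>. \<lambda>i\<in>{..<length ts}. X (ts ! i) \<omega>) = (\<lambda>\<omega>. \<lambda>i\<in>{..<length ts}. tc \<alpha> X ((ts ! i) powr \<alpha>) \<omega>)"
  proof (intro ext)
    fix \<omega> i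
    show "(\<lambda>i\<in>{..<length ts}. X (ts ! i) \<omega>) i = (\<lambda>i\<in>{..<length ts}. tc \<alpha> X ((ts ! i) powr \<alpha>) \<omega>) i"
    proof (cases "i < length ts")
      case True
      then have "ts ! i \<ge> 0" using ts nth_mem by blast
      then show ?thesis using True a unfolding tc_def by (simp add: powr_inv_cancel)
    qed simp
  qed
  then show "fdd M X ts = fdd M (\<lambda>t. tc \<alpha> X (t powr \<alpha>)) ts" unfolding fdd_def by simp
qed

lemma tc_indep:
  fixes X :: "real \<Rightarrow> 'w \<Rightarrow> 'a::euclidean_space"
  assumes a: "\<alpha> > 0" and II: "indep_increments M X" and P: "prob_space M"
  shows "indep_increments M (tc \<alpha> X)"
  unfolding indep_increments_def
proof (intro allI impI)
  fix ts :: "real list" assume s: "sorted_wrt (<) ts" and ts: "\<forall>t\<in>set ts. 0 \<le> t"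
  define ts' where "ts' = map (\<lambda>t. t powr (1/\<alpha>)) ts"
  have s': "sorted_wrt (<) ts'"
    unfolding ts'_def sorted_wrt_map
    by (rule sorted_wrt_mono_rel[OF _ s]) (use ts a in \<open>auto intro: powr_less_mono2\<close>)
  have ts': "\<forall>t\<in>set ts'. 0 \<le> t" unfolding ts'_def by auto
  have I: "prob_space.indep_vars M (\<lambda>_. borel) (\<lambda>i \<omega>. X (ts' ! Suc i) \<omega> - X (ts' ! i) \<omega>) {..<length ts' - 1}"
    using II s' ts' unfolding indep_increments_def by blast
  show "prob_space.indep_vars M (\<lambda>_. borel) (\<lambda>i \<omega>. tc \<alpha> X (ts ! Suc i) \<omega> - tc \<alpha> X (ts ! i) \<omega>) {..<length ts - 1}"
  proof -
    have eqs: "(\<lambda>\<omega>. X (ts' ! Suc i) \<omega> - X (ts' ! i) \<omega>) = (\<lambda>\<omega>. tc \<alpha> X (ts ! Suc i) \<omega> - tc \<alpha> X (ts ! i) \<omega>)"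
      if "i \<in> {..<length ts - 1}" for i
      using that unfolding ts'_def tc_def by auto
    interpret prob_space M by fact
    have "length ts' = length ts" unfolding ts'_def by simp
    then show ?thesis
      using I eqs by (subst (asm) indep_vars_cong[where J="{..<length ts - 1}" and N'="\<lambda>_. borel"]) auto
  qed
qed

lemma powr_inj_nonneg: "b > 0 \<Longrightarrow> s \<ge> 0 \<Longrightarrow> t \<ge> 0 \<Longrightarrow> s \<noteq> t \<Longrightarrow> s powr b \<noteq> (t::real) powr b"
  by (metis linorder_neq_iff powr_less_mono2 order_less_irrefl)

lemma filterlim_powr_within:
  assumes b: "b > 0" and t: "t \<ge> 0"
  shows "filterlim (\<lambda>s::real. s powr b) (at (t powr b) within {0..}) (at t within {0..})"
  unfolding filterlim_at
proof
  show "eventually (\<lambda>s. s powr b \<in> {0..} \<and> s powr b \<noteq> t powr b) (at t within {0..})"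
    unfolding eventually_at_filter using b t powr_inj_nonneg by auto
  have ev: "eventually (\<lambda>s. s \<ge> 0) (at t within {0..})"
    using eventually_within_self[of "{0..}" t] by simp
  show "((\<lambda>s. s powr b) \<longlongrightarrow> t powr b) (at t within {0..})"
    by (rule tendsto_powr'[OF tendsto_ident_at tendsto_const]) (use b ev in auto)
qed

lemma tc_sc:
  fixes X :: "real \<Rightarrow> 'w \<Rightarrow> 'a::euclidean_space"
  assumes a: "\<alpha> > 0" and SC: "stoch_continuous M X"
  shows "stoch_continuous M (tc \<alpha> X)"
  unfolding stoch_continuous_def
proof (intro allI impI)
  fix t \<epsilon> :: real assume t: "t \<ge> 0" and e: "\<epsilon> > 0"
  have b: "1/\<alpha> > 0" using a by simp
  have "((\<lambda>r. measure M {\<omega>\<in>space M. dist (X r \<omega>) (X (t powr (1/\<alpha>)) \<omega>) > \<epsilon>}) \<longlongrightarrow> 0) (at (t powr (1/\<alpha>)) within {0..})"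
    using SC e unfolding stoch_continuous_def by simp
  from filterlim_compose[OF this filterlim_powr_within[OF b t]]
  show "((\<lambda>s. measure M {\<omega>\<in>space M. dist (tc \<alpha> X s \<omega>) (tc \<alpha> X t \<omega>) > \<epsilon>}) \<longlongrightarrow> 0) (at t within {0..})"
    unfolding tc_def by simp
qed

lemma seq_cont_within:
  fixes \<phi> :: "real \<Rightarrow> 'b::topological_space"
  assumes c: "(\<phi> \<longlongrightarrow> \<phi> a) (at a within S)" and x: "x \<longlonglongrightarrow> a" and xS: "\<And>k. x k \<in> S"
  shows "(\<lambda>k. \<phi> (x k)) \<longlonglongrightarrow> \<phi> a"
proof -
  have c': "(\<phi> \<longlongrightarrow> \<phi> a) (inf (nhds a) (principal S))"
    using c by (simp add: tendsto_at_within_iff_tendsto_nhds)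
  have "filterlim x (inf (nhds a) (principal S)) sequentially"
    unfolding filterlim_inf filterlim_principal using x xS by auto
  from filterlim_compose[OF c' this] show ?thesis .
qed

locale idt_setup =
  fixes \<alpha> :: real and M :: "'w measure" and X :: "real \<Rightarrow> 'w \<Rightarrow> 'a::euclidean_space"
  assumes a: "\<alpha> > 0"
    and IDT: "alpha_IDT \<alpha> M X"
    and SC: "stoch_continuous M X"
    and II: "indep_increments M X"
begin

abbreviation "Y \<equiv> tc \<alpha> X"

lemma procX: "is_process M X" using IDT unfolding alpha_IDT_def by simp
lemma P: "prob_space M" using procX unfolding is_process_def by simp
lemma Xm: "s \<ge> 0 \<Longrightarrow> X s \<in> borel_measurable M" using procX unfolding is_process_def by simp
lemma procY: "is_process M Y" by (rule tc_process[OF a procX])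
lemma Ym: "s \<ge> 0 \<Longrightarrow> Y s \<in> borel_measurable M" using procY unfolding is_process_def by simp
lemma Y0: "AE \<omega> in M. Y 0 \<omega> = 0" unfolding tc_def using X0_law(2)[OF IDT] by simp
lemma Y0law: "distr M borel (Y 0) = distr M borel (\<lambda>_. 0)" unfolding tc_def using X0_law(1)[OF IDT] by simp
lemma scY: "stoch_continuous M Y" by (rule tc_sc[OF a SC])
lemma iiY: "indep_increments M Y" by (rule tc_indep[OF a II P])

lemma phi0: "cf M (Y 0) u = 1"
proof -
  have "cf M (Y 0) u = cf M (\<lambda>_. 0) u"
    by (rule cf_AE_cong[OF Ym]) (use Y0 in auto)
  then show ?thesis using cf_const0[OF P] by simp
qed

lemma phi_pow: "t \<ge> 0 \<Longrightarrow> cf M (Y (real k * t)) u = (cf M (Y t) u) ^ k"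
proof (cases "k = 0")
  case True then show ?thesis using phi0 by simp
next
  case False
  assume t: "t \<ge> 0"
  have "Y (real k * t) = X (real k powr (1/\<alpha>) * t powr (1/\<alpha>))"
    unfolding tc_def by (simp add: powr_mult)
  then have "cf M (Y (real k * t)) u = (cf M (X (t powr (1/\<alpha>))) u) ^ k"
    using idt_char[OF IDT, of k "t powr (1/\<alpha>)" u] False by simp
  then show ?thesis unfolding tc_def by simp
qed

lemma phi_cont: "t \<ge> 0 \<Longrightarrow> ((\<lambda>s. cf M (Y s) u) \<longlongrightarrow> cf M (Y t) u) (at t within {0..})"
  by (rule cf_tendsto_prob[OF P, of "{0..}" Y t]) (use Ym scY in \<open>auto simp: stoch_continuous_def\<close>)

lemma phi_nonzero:
  assumes t: "t \<ge> 0" shows "cf M (Y t) u \<noteq> 0"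
proof
  assume z: "cf M (Y t) u = 0"
  have tpos: "t > 0" using z phi0[of u] t by (cases "t = 0") auto
  define x where "x = (\<lambda>n::nat. t / real (Suc n))"
  have x0: "x \<longlonglongrightarrow> 0"
    unfolding x_def using LIMSEQ_Suc[OF lim_const_over_n[of t]] by simp
  have xS: "x k \<in> {0..}" for k unfolding x_def using t by simp
  have "(\<lambda>k. cf M (Y (x k)) u) \<longlonglongrightarrow> cf M (Y 0) u"
    by (rule seq_cont_within[OF phi_cont x0 xS]) simp
  moreover have "cf M (Y (x k)) u = 0" for k
  proof -
    have "cf M (Y (real (Suc k) * x k)) u = (cf M (Y (x k)) u) ^ Suc k"
      by (rule phi_pow) (use xS in simp)
    moreover have "real (Suc k) * x k = t" unfolding x_def by simp
    ultimately have "(cf M (Y (x k)) u) ^ Suc k = 0" using z by simp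
    then show ?thesis by (simp only: power_eq_0_iff)
  qed
  ultimately have "(\<lambda>k. 0::complex) \<longlonglongrightarrow> 1" using phi0[of u] by simp
  from LIMSEQ_unique[OF this tendsto_const] show False by simp
qed

end

lemma dyadic_lim:
  assumes a: "(a::real) \<ge> 0"
  shows "(\<lambda>k. real (nat \<lfloor>a * 2^k\<rfloor>) * (1 / 2^k)) \<longlonglongrightarrow> a"
proof (rule tendsto_sandwich[where f="\<lambda>k. a - (1/2)^k" and h="\<lambda>k. a"])
  have b: "a * 2^k - 1 \<le> real (nat \<lfloor>a * 2^k\<rfloor>) \<and> real (nat \<lfloor>a * 2^k\<rfloor>) \<le> a * 2^k" for k :: nat
  proof -
    have "\<lfloor>a * 2^k\<rfloor> \<ge> 0" using a by simp
    then have "real (nat \<lfloor>a * 2^k\<rfloor>) = of_int \<lfloor>a * 2^k\<rfloor>" by simp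
    then show ?thesis by linarith
  qed
  show "eventually (\<lambda>k. a - (1/2)^k \<le> real (nat \<lfloor>a * 2^k\<rfloor>) * (1 / 2^k)) sequentially"
  proof (rule always_eventually, rule allI)
    fix k :: nat
    have "a - (1/2)^k = (a * 2^k - 1) * (1/2^k)" by (simp add: field_simps power_divide)
    also have "\<dots> \<le> real (nat \<lfloor>a * 2^k\<rfloor>) * (1 / 2^k)" using b[of k] by (intro mult_right_mono) auto
    finally show "a - (1/2)^k \<le> real (nat \<lfloor>a * 2^k\<rfloor>) * (1 / 2^k)" .
  qed
  show "eventually (\<lambda>k. real (nat \<lfloor>a * 2^k\<rfloor>) * (1 / 2^k) \<le> a) sequentially"
  proof (rule always_eventually, rule allI)
    fix k :: nat
    have "real (nat \<lfloor>a * 2^k\<rfloor>) * (1 / 2^k) \<le> (a * 2^k) * (1/2^k)" using b[of k] by (intro mult_right_mono) auto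
    also have "\<dots> = a" by simp
    finally show "real (nat \<lfloor>a * 2^k\<rfloor>) * (1 / 2^k) \<le> a" .
  qed
  show "(\<lambda>k. a - (1/2)^k) \<longlonglongrightarrow> a"
    using tendsto_diff[OF tendsto_const LIMSEQ_realpow_zero[of "1/2::real"]] by simp
  show "(\<lambda>k. a) \<longlonglongrightarrow> a" by simp
qed

context idt_setup begin

lemma phi_mult:
  assumes a0: "a \<ge> 0" and b0: "b \<ge> 0"
  shows "cf M (Y (a + b)) u = cf M (Y a) u * cf M (Y b) u"
proof -
  define p where "p = (\<lambda>k::nat. nat \<lfloor>a * 2^k\<rfloor>)"
  define q where "q = (\<lambda>k::nat. nat \<lfloor>b * 2^k\<rfloor>)"
  define e where "e = (\<lambda>k::nat. (1::real) / 2^k)"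
  have e0: "e k \<ge> 0" for k unfolding e_def by simp
  have la: "(\<lambda>k. real (p k) * e k) \<longlonglongrightarrow> a" unfolding p_def e_def by (rule dyadic_lim[OF a0])
  have lb: "(\<lambda>k. real (q k) * e k) \<longlonglongrightarrow> b" unfolding q_def e_def by (rule dyadic_lim[OF b0])
  have lab: "(\<lambda>k. real (p k + q k) * e k) \<longlonglongrightarrow> a + b"
    using tendsto_add[OF la lb] by (simp add: distrib_right)
  have S: "real n * e k \<in> {0..}" for n k using e0[of k] by simp
  have c1: "(\<lambda>k. cf M (Y (real (p k) * e k)) u) \<longlonglongrightarrow> cf M (Y a) u"
    by (rule seq_cont_within[OF phi_cont la S]) (rule a0)
  have c2: "(\<lambda>k. cf M (Y (real (q k) * e k)) u) \<longlonglongrightarrow> cf M (Y b) u"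
    by (rule seq_cont_within[OF phi_cont lb S]) (rule b0)
  have c3: "(\<lambda>k. cf M (Y (real (p k + q k) * e k)) u) \<longlonglongrightarrow> cf M (Y (a + b)) u"
    by (rule seq_cont_within[OF phi_cont lab S]) (use a0 b0 in simp)
  have eq: "cf M (Y (real (p k + q k) * e k)) u = cf M (Y (real (p k) * e k)) u * cf M (Y (real (q k) * e k)) u" for k
    using phi_pow[OF e0[of k], of "p k + q k" u] phi_pow[OF e0[of k], of "p k" u] phi_pow[OF e0[of k], of "q k" u]
    by (simp add: power_add)
  have "(\<lambda>k. cf M (Y (real (p k + q k) * e k)) u) \<longlonglongrightarrow> cf M (Y a) u * cf M (Y b) u"
    unfolding eq by (rule tendsto_mult[OF c1 c2])
  from LIMSEQ_unique[OF c3 this] show ?thesis .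
qed

end

lemma prod_lessThan_2: "(\<Prod>i\<in>{..<2::nat}. f i) = f 0 * (f 1 :: 'b::comm_monoid_mult)"
  by (simp add: numeral_2_eq_2 lessThan_Suc mult.commute)

context idt_setup begin

lemma cf_minus_Y0:
  assumes t: "t \<ge> 0"
  shows "cf M (\<lambda>\<omega>. Y t \<omega> - Y 0 \<omega>) u = cf M (Y t) u"
proof (rule cf_AE_cong)
  show "(\<lambda>\<omega>. Y t \<omega> - Y 0 \<omega>) \<in> borel_measurable M" using Ym[OF t] Ym[of 0] by simp
  show "Y t \<in> borel_measurable M" by (rule Ym[OF t])
  show "AE \<omega> in M. Y t \<omega> - Y 0 \<omega> = Y t \<omega>" using Y0 by (rule AE_mp) simp
qed

lemma incr_cf:
  assumes s: "s \<ge> 0" and t: "t \<ge> 0"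
  shows "cf M (\<lambda>\<omega>. Y (t + s) \<omega> - Y s \<omega>) u = cf M (Y t) u"
proof (cases "t = 0")
  case True
  then show ?thesis using phi0[of u] cf_const0[OF P, of u] by simp
next
  case tne: False
  show ?thesis
  proof (cases "s = 0")
    case True
    then show ?thesis using cf_minus_Y0[OF t] by simp
  next
    case sne: False
    interpret prob_space M by (rule P)
    have tp: "t > 0" and sp: "s > 0" using t tne s sne by auto
    define ts where "ts = [0, s, t + s]"
    have "sorted_wrt (<) ts" "\<forall>x\<in>set ts. 0 \<le> x" unfolding ts_def using sp tp by auto
    then have I0: "indep_vars (\<lambda>_. borel) (\<lambda>i \<omega>. Y (ts ! Suc i) \<omega> - Y (ts ! i) \<omega>) {..<length ts - 1}"
      using iiY unfolding indep_increments_def by blast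
    have len: "length ts - 1 = 2" unfolding ts_def by simp
    note I = I0[unfolded len]
    define D where "D = (\<lambda>i \<omega>. Y (ts ! Suc i) \<omega> - Y (ts ! i) \<omega>)"
    have D0: "D 0 = (\<lambda>\<omega>. Y s \<omega> - Y 0 \<omega>)" and D1: "D 1 = (\<lambda>\<omega>. Y (t + s) \<omega> - Y s \<omega>)"
      unfolding D_def ts_def by simp_all
    have Dm: "D i \<in> borel_measurable M" if "i \<in> {..<2}" for i
    proof -
      have "i = 0 \<or> i = 1" using that by auto
      moreover have "D (Suc 0) = (\<lambda>\<omega>. Y (t + s) \<omega> - Y s \<omega>)" using D1 by simp
      ultimately show ?thesis using Ym[OF s] Ym[of 0] Ym[of "t+s"] s t by (auto simp: D0)
    qed
    have I2: "indep_vars (\<lambda>_. borel) (\<lambda>i \<omega>. exp (\<i> * complex_of_real (u \<bullet> D i \<omega>))) {..<2}"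
      using indep_vars_compose2[OF I[folded D_def], of "\<lambda>_ x. exp (\<i> * complex_of_real (u \<bullet> x))" "\<lambda>_. borel"]
        iexp_inner_bm[of u] by simp
    have "(CLINT \<omega>|M. (\<Prod>i\<in>{..<2}. exp (\<i> * complex_of_real (u \<bullet> D i \<omega>)))) =
          (\<Prod>i\<in>{..<2}. CLINT \<omega>|M. exp (\<i> * complex_of_real (u \<bullet> D i \<omega>)))"
      by (rule indep_vars_lebesgue_integral[OF _ I2]) (auto intro: cf_integrable[OF P Dm])
    then have "(CLINT \<omega>|M. exp (\<i> * complex_of_real (u \<bullet> D 0 \<omega>)) * exp (\<i> * complex_of_real (u \<bullet> D 1 \<omega>))) =
          cf M (D 0) u * cf M (D 1) u"
      unfolding prod_lessThan_2 cf_def .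
    moreover have "exp (\<i> * complex_of_real (u \<bullet> D 0 \<omega>)) * exp (\<i> * complex_of_real (u \<bullet> D 1 \<omega>))
        = exp (\<i> * complex_of_real (u \<bullet> (Y (t + s) \<omega> - Y 0 \<omega>)))" for \<omega>
      unfolding D0 D1 by (simp add: exp_add[symmetric] inner_diff_right algebra_simps)
    ultimately have "cf M (\<lambda>\<omega>. Y (t + s) \<omega> - Y 0 \<omega>) u = cf M (D 0) u * cf M (D 1) u"
      unfolding cf_def by simp
    then have "cf M (Y (t + s)) u = cf M (Y s) u * cf M (\<lambda>\<omega>. Y (t + s) \<omega> - Y s \<omega>) u"
      using cf_minus_Y0[of "t + s" u] cf_minus_Y0[OF s, of u] s t unfolding D0 D1 by simp
    moreover have "cf M (Y (t + s)) u = cf M (Y s) u * cf M (Y t) u"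
      using phi_mult[OF t s, of u] by (simp add: mult.commute)
    ultimately show ?thesis using phi_nonzero[OF s, of u] by simp
  qed
qed

lemma statY: "stationary_increments M Y"
  unfolding stationary_increments_def
proof (intro allI impI)
  fix s t :: real assume s: "s \<ge> 0" and t: "t \<ge> 0"
  show "distr M borel (\<lambda>\<omega>. Y (t + s) \<omega> - Y s \<omega>) = distr M borel (Y t)"
  proof (rule law_eq_cf[OF P P])
    show "(\<lambda>\<omega>. Y (t + s) \<omega> - Y s \<omega>) \<in> borel_measurable M" using Ym s t by simp
    show "Y t \<in> borel_measurable M" by (rule Ym[OF t])
    show "cf M (\<lambda>\<omega>. Y (t + s) \<omega> - Y s \<omega>) u = cf M (Y t) u" for u by (rule incr_cf[OF s t])
  qed
qed

lemma levyY: "levy_process M Y"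
  unfolding levy_process_def using procY Y0 iiY statY scY by simp

end

theorem mainTheorem2:
  fixes \<alpha> :: real and M :: "'w measure" and X :: "real \<Rightarrow> 'w \<Rightarrow> 'a::euclidean_space"
  assumes "\<alpha> > 0"
    and "alpha_IDT \<alpha> M X"
    and "stoch_continuous M X"
    and "indep_increments M X"
  shows "\<exists>(N :: 'w measure) (L :: real \<Rightarrow> 'w \<Rightarrow> 'a).
           levy_process N L \<and> eq_law M X N (\<lambda>t. L (t powr \<alpha>))"
proof -
  interpret idt_setup \<alpha> M X by unfold_locales (use assms in auto)
  show ?thesis using levyY tc_eq_law[OF assms(1)] by blast
qed

end
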